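(* If $\mathfrak p>\aleph_1$ and $( * )$ holds, then $(\mathrm A)$ holds.
   Context: $[S]^{\le\aleph_0}$: countable subsets of $S$; $x\subseteq^*y$ iff $x\setminus y$ is finite; $\downarrow\mathcal H=\bigcup_{x\in\mathcal H}\mathcal P(x)$; a set is locally in $\mathcal K$ if all its countable subsets are in $\mathcal K$; $B$ is orthogonal to $\mathcal H$ if $B\cap x$ is finite for every $x\in\mathcal H$. $\mathfrak p$ is the least cardinality of a family $\mathcal A\subseteq[\omega]^{\aleph_0}$ with the finite intersection property (every nonempty finite subfamily has infinite intersection) with no infinite $\subseteq^*$-lower bound. $( * )$: for every ordinal $\theta$ and every $\sigma$-directed (every countable subset has an upper bound) subfamily $\mathcal H$ of $([\theta]^{\le\aleph_0},\subseteq^* )$, either there is an uncountable $X\subseteq\theta$ locally in $\downarrow\mathcal H$, or $\theta$ is a union of countably many sets orthogonal to $\mathcal H$. $(\mathrm A)$: for every set $S$ and every directed subfamily $\mathcal H$ of $([S]^{\le\aleph_0},\subseteq^* )$ with $|\mathcal H|\le\aleph_1$, either (1) $S$ has a countable decomposition into singletons and pieces locally in $\downarrow\mathcal H$, or (2) there is an uncountable subset of $S$ orthogonal to $\mathcal H$. *)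

theory Defs
  imports Main "HOL-Library.Countable_Set"
begin

definition almost_subset :: "'a set \<Rightarrow> 'a set \<Rightarrow> bool" where
  "almost_subset x y \<longleftrightarrow> finite (x - y)"

definition down :: "'a set set \<Rightarrow> 'a set set" where
  "down H = (\<Union>x\<in>H. Pow x)"

definition locally_in :: "'a set \<Rightarrow> 'a set set \<Rightarrow> bool" where
  "locally_in X K \<longleftrightarrow> (\<forall>y. y \<subseteq> X \<and> countable y \<longrightarrow> y \<in> K)"

definition orthogonal :: "'a set \<Rightarrow> 'a set set \<Rightarrow> bool" where
  "orthogonal B H \<longleftrightarrow> (\<forall>x\<in>H. finite (B \<inter> x))"

definition countable_subsets_family :: "'a set \<Rightarrow> 'a set set \<Rightarrow> bool" where
  "countable_subsets_family S H \<longleftrightarrow> (\<forall>x\<in>H. x \<subseteq> S \<and> countable x)"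

definition directed_ae :: "'a set set \<Rightarrow> bool" where
  "directed_ae H \<longleftrightarrow>
     (\<forall>C. C \<subseteq> H \<and> finite C \<longrightarrow> (\<exists>u\<in>H. \<forall>c\<in>C. almost_subset c u))"

definition sigma_directed_ae :: "'a set set \<Rightarrow> bool" where
  "sigma_directed_ae H \<longleftrightarrow>
     (\<forall>C. C \<subseteq> H \<and> countable C \<longrightarrow> (\<exists>u\<in>H. \<forall>c\<in>C. almost_subset c u))"

text \<open>The cardinal invariant p is greater than aleph_1: every family of at most
  aleph_1 infinite subsets of omega with the strong finite intersection property
  has an infinite pseudo-intersection (an infinite almost-lower bound).\<close>
definition p_gt_aleph1 :: bool where
  "p_gt_aleph1 \<longleftrightarrow>
     (\<forall>A :: nat set set.
        (\<forall>a\<in>A. infinite a)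
        \<and> (\<forall>F. F \<subseteq> A \<and> finite F \<and> F \<noteq> {} \<longrightarrow> infinite (\<Inter>F))
        \<and> ordLeq2 (card_of A) (cardSuc natLeq)
        \<longrightarrow> (\<exists>B. infinite B \<and> (\<forall>a\<in>A. almost_subset B a)))"

text \<open>Principle (*), for all "ordinals" theta, represented as sets of elements of type 'a.\<close>
definition star_principle :: "'a itself \<Rightarrow> bool" where
  "star_principle _ \<longleftrightarrow>
     (\<forall>(\<theta>::'a set) (H::'a set set).
        countable_subsets_family \<theta> H \<and> sigma_directed_ae H \<longrightarrow>
          (\<exists>X. X \<subseteq> \<theta> \<and> uncountable X \<and> locally_in X (down H))
          \<or> (\<exists>P::'a set set. countable P \<and> \<Union>P = \<theta> \<and> (\<forall>B\<in>P. orthogonal B H)))"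

definition principle_A :: "'a itself \<Rightarrow> bool" where
  "principle_A _ \<longleftrightarrow>
     (\<forall>(S::'a set) (H::'a set set).
        countable_subsets_family S H \<and> directed_ae H
        \<and> ordLeq2 (card_of H) (cardSuc natLeq) \<longrightarrow>
          (\<exists>P::'a set set. countable P \<and> \<Union>P = S \<and> pairwise disjnt P
              \<and> (\<forall>B\<in>P. (\<exists>s. B = {s}) \<or> locally_in B (down H)))
          \<or> (\<exists>X. X \<subseteq> S \<and> uncountable X \<and> orthogonal X H))"

end

theory Submission
  imports Defs
begin
unbundle cardinal_syntax

lemma dominate:
  assumes p: p_gt_aleph1 and F: "|F| \<le>o cardSuc natLeq"
  shows "\<exists>g::nat\<Rightarrow>nat. \<forall>f\<in>F. \<exists>N. \<forall>n\<ge>N. f n \<le> g n"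
proof -
  define Fm :: "(nat\<Rightarrow>nat) \<Rightarrow> nat \<Rightarrow> nat" where "Fm f n = Max (f ` {..n})" for f n
  have Fm_ge: "f n \<le> Fm f n" for f n unfolding Fm_def by (rule Max_ge) auto
  have Fm_mono: "n \<le> n' \<Longrightarrow> Fm f n \<le> Fm f n'" for f n n' unfolding Fm_def
    by (rule Max_mono) auto
  define Af where "Af f = {x. Fm f (fst (prod_decode x)) \<le> snd (prod_decode x)}" for f
  define T where "T k = {x. k \<le> fst (prod_decode x)}" for k
  define A where "A = Af ` F \<union> range T"
  have key: "\<exists>K0. \<forall>K\<ge>K0. \<exists>M. \<forall>m\<ge>M. \<forall>a\<in>G. prod_encode (K,m) \<in> a"
    if "finite G" "G \<subseteq> A" for G
    using that
  proof (induction G rule: finite_induct)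
    case empty then show ?case by auto
  next
    case (insert a G)
    then obtain K0 where K0: "\<forall>K\<ge>K0. \<exists>M. \<forall>m\<ge>M. \<forall>a\<in>G. prod_encode (K,m) \<in> a" by auto
    from insert.prems have "a \<in> A" by auto
    then consider f where "a = Af f" | k where "a = T k" unfolding A_def by auto
    then show ?case
    proof cases
      case 1
      show ?thesis
      proof (rule exI[of _ K0], intro allI impI)
        fix K assume "K0 \<le> K"
        then obtain M where M: "\<forall>m\<ge>M. \<forall>a\<in>G. prod_encode (K,m) \<in> a" using K0 by auto
        show "\<exists>M. \<forall>m\<ge>M. \<forall>a\<in>insert a G. prod_encode (K, m) \<in> a"
          by (rule exI[of _ "max M (Fm f K)"]) (use M 1 in \<open>auto simp: Af_def\<close>)
      qed
    next
      case 2
      show ?thesis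
      proof (rule exI[of _ "max K0 k"], intro allI impI)
        fix K assume "max K0 k \<le> K"
        then obtain M where M: "\<forall>m\<ge>M. \<forall>a\<in>G. prod_encode (K,m) \<in> a" using K0 by auto
        show "\<exists>M. \<forall>m\<ge>M. \<forall>a\<in>insert a G. prod_encode (K, m) \<in> a"
          by (rule exI[of _ M]) (use M 2 \<open>max K0 k \<le> K\<close> in \<open>auto simp: T_def\<close>)
      qed
    qed
  qed
  have infK: "infinite {prod_encode (K,m) | m. M \<le> m}" for K M
  proof -
    have "{prod_encode (K,m) | m. M \<le> m} = (\<lambda>m. prod_encode (K,m)) ` {M..}" by auto
    moreover have "inj (\<lambda>m. prod_encode (K,m))" by (auto simp: inj_def prod_encode_eq)
    ultimately show ?thesis
      using finite_imageD[of "\<lambda>m. prod_encode (K,m)" "{M..}"] infinite_Ici[of M] inj_on_subset[of _ UNIV "{M..}"] by auto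
  qed
  have inf_int: "infinite (\<Inter>G)" if GA: "G \<subseteq> A" "finite G" "G \<noteq> {}" for G
  proof -
    obtain K0 where "\<forall>K\<ge>K0. \<exists>M. \<forall>m\<ge>M. \<forall>a\<in>G. prod_encode (K,m) \<in> a"
      using key[OF GA(2,1)] by blast
    then obtain M where M: "\<forall>m\<ge>M. \<forall>a\<in>G. prod_encode (K0,m) \<in> a" by auto
    have "{prod_encode (K0,m) | m. M \<le> m} \<subseteq> \<Inter>G" using M by auto
    thus ?thesis using infK[of K0 M] finite_subset by auto
  qed
  have all_inf: "infinite a" if "a \<in> A" for a
  proof -
    have "infinite (\<Inter>{a})" using inf_int[of "{a}"] that by auto
    thus ?thesis by simp
  qed
  have cinf: "Cinfinite (cardSuc natLeq)"
    by (rule Cinfinite_cardSuc) (simp add: natLeq_cinfinite natLeq_Card_order)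
  have c1: "|Af ` F| \<le>o cardSuc natLeq"
    using ordLeq_transitive[OF card_of_image F] .
  have c2: "|range T| \<le>o cardSuc natLeq"
  proof -
    have "|range T| \<le>o |UNIV :: nat set|" by (rule card_of_image)
    moreover have "|UNIV :: nat set| =o natLeq" by (rule card_of_nat)
    moreover have "natLeq \<le>o cardSuc natLeq" by (simp add: cardSuc_ordLeq natLeq_Card_order)
    ultimately show ?thesis using ordLeq_ordIso_trans ordLeq_transitive by blast
  qed
  have cA: "|A| \<le>o cardSuc natLeq" unfolding A_def using Un_Cinfinite_bound[OF c1 c2 cinf] .
  obtain B where B: "infinite B" "\<forall>a\<in>A. almost_subset B a"
  proof -
    have "(\<forall>a\<in>A. infinite a) \<and> (\<forall>G. G \<subseteq> A \<and> finite G \<and> G \<noteq> {} \<longrightarrow> infinite (\<Inter>G)) \<and> |A| \<le>o cardSuc natLeq"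
      using all_inf inf_int cA by blast
    hence "\<exists>B. infinite B \<and> (\<forall>a\<in>A. almost_subset B a)" using p unfolding p_gt_aleph1_def by (elim allE[of _ A]) auto
    thus ?thesis using that by blast
  qed
  have col: "\<exists>x\<in>B. k \<le> fst (prod_decode x)" for k
  proof (rule ccontr)
    assume "\<not> ?thesis"
    hence "B - T k = B" by (auto simp: T_def)
    moreover have "T k \<in> A" by (auto simp: A_def)
    ultimately show False using B unfolding almost_subset_def by auto
  qed
  define pp where "pp n = (LEAST x. x \<in> B \<and> n \<le> fst (prod_decode x))" for n
  have pp: "pp n \<in> B \<and> n \<le> fst (prod_decode (pp n))" for n
    unfolding pp_def using col[of n] LeastI_ex[of "\<lambda>x. x \<in> B \<and> n \<le> fst (prod_decode x)"] by auto
  define g where "g n = snd (prod_decode (pp n))" for n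
  show ?thesis
  proof (intro exI[of _ g] ballI)
    fix f assume "f \<in> F"
    hence "Af f \<in> A" by (auto simp: A_def)
    hence E: "finite (B - Af f)" using B unfolding almost_subset_def by auto
    define N where "N = Suc (Max (insert 0 ((\<lambda>x. fst (prod_decode x)) ` (B - Af f))))"
    show "\<exists>N. \<forall>n\<ge>N. f n \<le> g n"
    proof (intro exI[of _ N] allI impI)
      fix n assume "N \<le> n"
      have "pp n \<notin> B - Af f"
      proof
        assume "pp n \<in> B - Af f"
        hence "fst (prod_decode (pp n)) \<le> Max (insert 0 ((\<lambda>x. fst (prod_decode x)) ` (B - Af f)))"
          using E by (intro Max_ge) auto
        thus False using pp[of n] \<open>N \<le> n\<close> unfolding N_def by auto
      qed
      hence "pp n \<in> Af f" using pp by auto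
      hence "Fm f (fst (prod_decode (pp n))) \<le> g n" by (auto simp: Af_def g_def)
      moreover have "f n \<le> Fm f (fst (prod_decode (pp n)))"
        using Fm_ge[of f n] Fm_mono[of n "fst (prod_decode (pp n))" f] pp[of n] by auto
      ultimately show "f n \<le> g n" by auto
    qed
  qed
qed

lemma locally_in_mono: "locally_in X K \<Longrightarrow> Y \<subseteq> X \<Longrightarrow> locally_in Y K"
  unfolding locally_in_def by blast

lemma sigma_O:
  assumes p: p_gt_aleph1 and cs: "countable_subsets_family S H"
    and cH: "|H| \<le>o cardSuc natLeq"
  shows "sigma_directed_ae {y. y \<subseteq> S \<and> countable y \<and> orthogonal y H}"
  unfolding sigma_directed_ae_def
proof (intro allI impI)
  define Ob where "Ob = {y. y \<subseteq> S \<and> countable y \<and> orthogonal y H}"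
  fix C assume C: "C \<subseteq> {y. y \<subseteq> S \<and> countable y \<and> orthogonal y H} \<and> countable C"
  show "\<exists>u\<in>{y. y \<subseteq> S \<and> countable y \<and> orthogonal y H}. \<forall>c\<in>C. almost_subset c u"
  proof (cases "C = {}")
    case True
    then show ?thesis by (intro bexI[of _ "{}"]) (auto simp: orthogonal_def)
  next
    case False
    define c where "c = from_nat_into C"
    have rc: "range c = C" unfolding c_def using False C by simp
    define Y where "Y = \<Union>C"
    have cY: "countable Y" unfolding Y_def using C countable_UN[of C "\<lambda>x. x"] by auto
    have YS: "Y \<subseteq> S" unfolding Y_def using C by auto
    define \<iota> where "\<iota> = to_nat_on Y"
    have inj: "inj_on \<iota> Y" unfolding \<iota>_def using cY by auto
    have cn: "c n \<in> C" for n using rc by auto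
    have cnY: "c n \<subseteq> Y" for n using cn unfolding Y_def by auto
    have fin: "finite (h \<inter> c n)" if "h \<in> H" for h n
      using cn[of n] C that unfolding orthogonal_def by (auto simp: Int_commute)
    define fh where "fh h n = Suc (Max (insert 0 (\<iota> ` (h \<inter> c n))))" for h n
    have fh: "\<iota> x < fh h n" if "h \<in> H" "x \<in> h" "x \<in> c n" for h n x
    proof -
      have "\<iota> x \<le> Max (insert 0 (\<iota> ` (h \<inter> c n)))"
        using fin[OF that(1)] that by (intro Max_ge) auto
      thus ?thesis unfolding fh_def by simp
    qed
    have "|fh ` H| \<le>o cardSuc natLeq" using ordLeq_transitive[OF card_of_image cH] .
    then obtain g where g: "\<forall>f\<in>fh ` H. \<exists>N. \<forall>n\<ge>N. f n \<le> g n" using dominate[OF p] by blast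
    define u where "u = (\<Union>n. {x \<in> c n. g n \<le> \<iota> x})"
    have uY: "u \<subseteq> Y" unfolding u_def using cnY by auto
    have "u \<in> Ob"
      unfolding Ob_def
    proof (intro CollectI conjI)
      show "u \<subseteq> S" using uY YS by auto
      show "countable u" using uY cY countable_subset by auto
      show "orthogonal u H" unfolding orthogonal_def
      proof
        fix h assume h: "h \<in> H"
        then obtain N where N: "\<forall>n\<ge>N. fh h n \<le> g n" using g by auto
        have "u \<inter> h \<subseteq> (\<Union>n<N. h \<inter> c n)"
        proof
          fix x assume "x \<in> u \<inter> h"
          then obtain n where x: "x \<in> c n" "g n \<le> \<iota> x" "x \<in> h" unfolding u_def by auto
          have "n < N"
          proof (rule ccontr)
            assume "\<not> n < N"
            hence "fh h n \<le> g n" using N by auto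
            thus False using fh[OF h x(3) x(1)] x(2) by auto
          qed
          thus "x \<in> (\<Union>n<N. h \<inter> c n)" using x by auto
        qed
        moreover have "finite (\<Union>n<N. h \<inter> c n)" using fin[OF h] by (intro finite_UN_I) auto
        ultimately show "finite (u \<inter> h)" by (rule finite_subset)
      qed
    qed
    moreover have "almost_subset d u" if dC: "d \<in> C" for d
    proof -
      obtain n where dn: "d = c n" using dC rc by auto
      have sub: "d - u \<subseteq> {x \<in> Y. \<iota> x < g n}" using dn cnY[of n] unfolding u_def by auto
      have "finite (\<iota> ` {x \<in> Y. \<iota> x < g n})"
        by (rule finite_subset[of _ "{..<g n}"]) auto
      hence "finite {x \<in> Y. \<iota> x < g n}"
        using finite_imageD inj_on_subset[OF inj] by (metis (no_types, lifting) mem_Collect_eq subsetI)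
      thus ?thesis unfolding almost_subset_def using sub finite_subset by auto
    qed
    ultimately show ?thesis unfolding Ob_def by blast
  qed
qed

lemma almost_cover:
  assumes p: p_gt_aleph1 and d: "directed_ae H"
    and cH: "|H| \<le>o cardSuc natLeq"
    and Bo: "orthogonal B {y. y \<subseteq> S \<and> countable y \<and> orthogonal y H}"
    and z: "z \<subseteq> B" "z \<subseteq> S" "countable z"
  shows "\<exists>h\<in>H. almost_subset z h"
proof (rule ccontr)
  assume "\<not> ?thesis"
  hence inf: "\<forall>h\<in>H. infinite (z - h)" unfolding almost_subset_def by auto
  have "\<exists>u\<in>H. \<forall>c\<in>{}. almost_subset c u" using d unfolding directed_ae_def by blast
  then obtain h0 where "h0 \<in> H" by blast
  hence "infinite z" using inf finite_subset[of "z - h0" z] by blast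
  define f where "f = to_nat_on z"
  have bij: "bij_betw f z UNIV" unfolding f_def using to_nat_on_infinite z(3) \<open>infinite z\<close> by blast
  hence inj: "inj_on f z" by (rule bij_betw_imp_inj_on)
  have fz: "f ` z = UNIV" using bij by (rule bij_betw_imp_surj_on)
  define A where "A = (\<lambda>h. f ` (z - h)) ` H"
  have infA: "infinite a" if aA: "a \<in> A" for a
  proof -
    obtain h where h: "h \<in> H" "a = f ` (z - h)" using aA unfolding A_def by auto
    show ?thesis using h inf inj_on_subset[OF inj, of "z - h"] finite_imageD by blast
  qed
  have intA: "infinite (\<Inter>G)" if GA: "G \<subseteq> A" "finite G" "G \<noteq> {}" for G
  proof -
    obtain K where K: "K \<subseteq> H" "finite K" "G = (\<lambda>h. f ` (z - h)) ` K"
      using finite_subset_image[OF GA(2) GA(1)[unfolded A_def]] by blast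
    obtain u where u: "u \<in> H" "\<forall>c\<in>K. almost_subset c u"
      using d K unfolding directed_ae_def by blast
    define R where "R = (z - u) - (\<Union>c\<in>K. c - u)"
    have fU: "finite (\<Union>c\<in>K. c - u)" using u K unfolding almost_subset_def by (intro finite_UN_I) auto
    have "infinite R" unfolding R_def using inf u(1) finite_Diff2[OF fU, of "z - u"] by simp
    hence "infinite (f ` R)" using inj_on_subset[OF inj, of R] finite_imageD unfolding R_def by blast
    moreover have "f ` R \<subseteq> \<Inter>G" unfolding R_def K(3) by auto
    ultimately show ?thesis using finite_subset by blast
  qed
  have cA: "|A| \<le>o cardSuc natLeq" unfolding A_def using ordLeq_transitive[OF card_of_image cH] .
  have "(\<forall>a\<in>A. infinite a) \<and> (\<forall>G. G \<subseteq> A \<and> finite G \<and> G \<noteq> {} \<longrightarrow> infinite (\<Inter>G)) \<and> |A| \<le>o cardSuc natLeq"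
    using infA intA cA by blast
  hence "\<exists>C. infinite C \<and> (\<forall>a\<in>A. almost_subset C a)" using p unfolding p_gt_aleph1_def by (elim allE[of _ A]) auto
  then obtain C where C: "infinite C" "\<forall>a\<in>A. almost_subset C a" by blast
  define w where "w = {x \<in> z. f x \<in> C}"
  have "f ` w = C" unfolding w_def using fz by auto
  hence infw: "infinite w" using C(1) by auto
  have "w \<in> {y. y \<subseteq> S \<and> countable y \<and> orthogonal y H}"
  proof (intro CollectI conjI)
    show "w \<subseteq> S" using z unfolding w_def by auto
    show "countable w" by (rule countable_subset[OF _ z(3)]) (auto simp: w_def)
    show "orthogonal w H" unfolding orthogonal_def
    proof
      fix h assume h: "h \<in> H"
      hence "finite (C - f ` (z - h))" using C(2) unfolding A_def almost_subset_def by auto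
      moreover have "f ` (w \<inter> h) \<subseteq> C - f ` (z - h)"
      proof
        fix y assume "y \<in> f ` (w \<inter> h)"
        then obtain x where x: "x \<in> w" "x \<in> h" "y = f x" by auto
        have "y \<notin> f ` (z - h)"
        proof
          assume "y \<in> f ` (z - h)"
          then obtain x' where "x' \<in> z" "x' \<notin> h" "y = f x'" by auto
          thus False using x inj unfolding w_def inj_on_def by auto
        qed
        thus "y \<in> C - f ` (z - h)" using x unfolding w_def by auto
      qed
      ultimately have "finite (f ` (w \<inter> h))" using finite_subset by blast
      moreover have "inj_on f (w \<inter> h)" by (rule inj_on_subset[OF inj]) (auto simp: w_def)
      ultimately show "finite (w \<inter> h)" using finite_imageD by blast
    qed
  qed
  hence "finite (B \<inter> w)" using Bo unfolding orthogonal_def by blast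
  moreover have "B \<inter> w = w" using z unfolding w_def by auto
  ultimately show False using infw by simp
qed

lemma closure_lemma:
  assumes cov: "\<forall>z. z \<subseteq> B \<and> countable z \<longrightarrow> (\<exists>h\<in>H. almost_subset z h)"
  shows "\<exists>e. finite e \<and> e \<subseteq> B \<and> locally_in (B - e) (down H)"
proof (rule ccontr)
  assume "\<not> ?thesis"
  note nt = this
  have "\<forall>e. \<exists>y. finite e \<and> e \<subseteq> B \<longrightarrow> y \<subseteq> B - e \<and> countable y \<and> y \<notin> down H"
  proof
    fix e
    show "\<exists>y. finite e \<and> e \<subseteq> B \<longrightarrow> y \<subseteq> B - e \<and> countable y \<and> y \<notin> down H"
    proof (cases "finite e \<and> e \<subseteq> B")
      case True
      hence "\<not> locally_in (B - e) (down H)" using nt by blast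
      then obtain y where "y \<subseteq> B - e" "countable y" "y \<notin> down H" unfolding locally_in_def by blast
      thus ?thesis by blast
    qed blast
  qed
  from choice[OF this] obtain Z where Z0: "\<forall>e. finite e \<and> e \<subseteq> B \<longrightarrow> Z e \<subseteq> B - e \<and> countable (Z e) \<and> Z e \<notin> down H"
    by blast
  have Z: "\<And>e. finite e \<Longrightarrow> e \<subseteq> B \<Longrightarrow> Z e \<subseteq> B - e \<and> countable (Z e) \<and> Z e \<notin> down H"
    using Z0 by blast
  define M where "M = rec_nat {} (\<lambda>n Mn. Mn \<union> \<Union>(Z ` {e. finite e \<and> e \<subseteq> Mn}))"
  have M0: "M 0 = {}" and MS: "M (Suc n) = M n \<union> \<Union>(Z ` {e. finite e \<and> e \<subseteq> M n})" for n
    unfolding M_def by simp_all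
  have Mprop: "M n \<subseteq> B \<and> countable (M n)" for n
  proof (induction n)
    case 0 then show ?case by (simp add: M0)
  next
    case (Suc n)
    have "countable {e. finite e \<and> e \<subseteq> M n}" using Suc countable_Collect_finite_subset by blast
    moreover have "countable (Z e)" "Z e \<subseteq> B" if "e \<in> {e. finite e \<and> e \<subseteq> M n}" for e
      using Z[of e] that Suc by auto
    ultimately show ?case unfolding MS[of n] using Suc by (intro conjI countable_Un countable_UN) auto
  qed
  have Msuc: "M n \<subseteq> M (Suc n)" for n unfolding MS[of n] by (rule Un_upper1)
  have Mmono: "M m \<subseteq> M n" if "m \<le> n" for m n
    using lift_Suc_mono_le[of M, OF Msuc that] .
  define Mi where "Mi = (\<Union>n. M n)"
  have "Mi \<subseteq> B" "countable Mi" unfolding Mi_def using Mprop by auto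
  then obtain h where h: "h \<in> H" "almost_subset Mi h" using cov by blast
  define e where "e = Mi - h"
  have fe: "finite e" using h(2) unfolding e_def almost_subset_def .
  have "e \<subseteq> Mi" unfolding e_def by auto
  have "\<exists>n. e' \<subseteq> M n" if "finite e'" "e' \<subseteq> Mi" for e'
    using that
  proof (induction e' rule: finite_induct)
    case empty then show ?case by auto
  next
    case (insert x F)
    then obtain n where n: "F \<subseteq> M n" by auto
    obtain k where k: "x \<in> M k" using insert.prems unfolding Mi_def by auto
    have "insert x F \<subseteq> M (max n k)" using n k Mmono[of n "max n k"] Mmono[of k "max n k"] by auto
    thus ?case by blast
  qed
  then obtain n where n: "e \<subseteq> M n" using fe \<open>e \<subseteq> Mi\<close> by blast
  have eB: "e \<subseteq> B" using \<open>e \<subseteq> Mi\<close> \<open>Mi \<subseteq> B\<close> by auto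
  have "Z e \<subseteq> M (Suc n)" unfolding MS[of n] using fe n by blast
  hence "Z e \<subseteq> Mi" unfolding Mi_def by auto
  moreover have "Z e \<inter> e = {}" using Z[OF fe eB] by auto
  ultimately have "Z e \<subseteq> h" unfolding e_def by auto
  hence "Z e \<in> down H" using h unfolding down_def by auto
  thus False using Z[OF fe eB] by auto
qed

theorem corollary5p1:
  assumes "p_gt_aleph1"
    and "star_principle TYPE('a)"
  shows "principle_A TYPE('a)"
  unfolding principle_A_def
proof (intro allI impI)
  fix S :: "'a set" and H :: "'a set set"
  assume asm: "countable_subsets_family S H \<and> directed_ae H \<and> |H| \<le>o cardSuc natLeq"
  hence cs: "countable_subsets_family S H" and d: "directed_ae H" and cH: "|H| \<le>o cardSuc natLeq"
    by auto
  define Ob where "Ob = {y. y \<subseteq> S \<and> countable y \<and> orthogonal y H}"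
  have sd: "sigma_directed_ae Ob" unfolding Ob_def by (rule sigma_O[OF assms(1) cs cH])
  have csO: "countable_subsets_family S Ob" unfolding Ob_def countable_subsets_family_def by auto
  have "(\<exists>X. X \<subseteq> S \<and> uncountable X \<and> locally_in X (down Ob))
          \<or> (\<exists>P::'a set set. countable P \<and> \<Union>P = S \<and> (\<forall>B\<in>P. orthogonal B Ob))"
    using assms(2)[unfolded star_principle_def, rule_format, of S Ob] csO sd by blast
  then show "(\<exists>P::'a set set. countable P \<and> \<Union>P = S \<and> pairwise disjnt P
              \<and> (\<forall>B\<in>P. (\<exists>s. B = {s}) \<or> locally_in B (down H)))
          \<or> (\<exists>X. X \<subseteq> S \<and> uncountable X \<and> orthogonal X H)"
  proof
    assume "\<exists>X. X \<subseteq> S \<and> uncountable X \<and> locally_in X (down Ob)"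
    then obtain X where X: "X \<subseteq> S" "uncountable X" "locally_in X (down Ob)" by blast
    have "orthogonal X H" unfolding orthogonal_def
    proof
      fix h assume h: "h \<in> H"
      hence "countable (X \<inter> h)" using cs unfolding countable_subsets_family_def
        using countable_subset by (metis Int_lower2)
      hence "X \<inter> h \<in> down Ob" using X(3) unfolding locally_in_def by auto
      then obtain y where y: "y \<in> Ob" "X \<inter> h \<subseteq> y" unfolding down_def by auto
      hence "finite (y \<inter> h)" using h unfolding Ob_def orthogonal_def by auto
      moreover have "X \<inter> h \<subseteq> y \<inter> h" using y by auto
      ultimately show "finite (X \<inter> h)" using finite_subset by blast
    qed
    thus ?thesis using X by blast
  next
    assume "\<exists>P::'a set set. countable P \<and> \<Union>P = S \<and> (\<forall>B\<in>P. orthogonal B Ob)"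
    then obtain P :: "'a set set" where P: "countable P" "\<Union>P = S" "\<forall>B\<in>P. orthogonal B Ob" by blast
    have "\<forall>B\<in>P. \<exists>e. finite e \<and> e \<subseteq> B \<and> locally_in (B - e) (down H)"
    proof
      fix B assume B: "B \<in> P"
      have "\<forall>z. z \<subseteq> B \<and> countable z \<longrightarrow> (\<exists>h\<in>H. almost_subset z h)"
      proof (intro allI impI)
        fix z assume z: "z \<subseteq> B \<and> countable z"
        have "z \<subseteq> S" using z B P(2) by auto
        thus "\<exists>h\<in>H. almost_subset z h"
          using almost_cover[OF assms(1) d cH, of B S z] P(3) B z unfolding Ob_def by auto
      qed
      thus "\<exists>e. finite e \<and> e \<subseteq> B \<and> locally_in (B - e) (down H)" by (rule closure_lemma)
    qed
    from bchoice[OF this] obtain ee where ee0: "\<forall>B\<in>P. finite (ee B) \<and> ee B \<subseteq> B \<and> locally_in (B - ee B) (down H)"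
      by blast
    have ee: "\<And>B. B \<in> P \<Longrightarrow> finite (ee B) \<and> ee B \<subseteq> B \<and> locally_in (B - ee B) (down H)"
      using ee0 by blast
    define E where "E = \<Union>(ee ` P)"
    have cE: "countable E" unfolding E_def using P(1) ee
      by (intro countable_UN) (auto intro: countable_finite)
    have ES: "E \<subseteq> S" unfolding E_def using ee P(2) by blast
    define \<iota> where "\<iota> = to_nat_on P"
    have inj: "inj_on \<iota> P" unfolding \<iota>_def using P(1) by auto
    define Q where "Q B = {s \<in> S - E. s \<in> B \<and> (\<forall>B'\<in>P. s \<in> B' \<longrightarrow> \<iota> B \<le> \<iota> B')}" for B
    define P' where "P' = (\<lambda>s. {s}) ` E \<union> Q ` P"
    have "countable P'" unfolding P'_def using cE P(1) by auto
    moreover have "\<Union>P' = S"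
    proof
      show "\<Union>P' \<subseteq> S" unfolding P'_def Q_def using ES by auto
      show "S \<subseteq> \<Union>P'"
      proof
        fix s assume s: "s \<in> S"
        show "s \<in> \<Union>P'"
        proof (cases "s \<in> E")
          case True then show ?thesis unfolding P'_def by auto
        next
          case False
          obtain B0 where "B0 \<in> P" "s \<in> B0" using s P(2) by auto
          then obtain B where B: "B \<in> P \<and> s \<in> B" "\<forall>B'. B' \<in> P \<and> s \<in> B' \<longrightarrow> \<iota> B \<le> \<iota> B'"
            using ex_has_least_nat[of "\<lambda>B. B \<in> P \<and> s \<in> B" B0 \<iota>] by blast
          hence "s \<in> Q B" unfolding Q_def using s False by auto
          thus ?thesis unfolding P'_def using B by auto
        qed
      qed
    qed
    moreover have "pairwise disjnt P'"
      unfolding pairwise_def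
    proof (intro ballI impI)
      fix X Y assume X: "X \<in> P'" and Y: "Y \<in> P'" and XY: "X \<noteq> Y"
      have QE: "Q B \<inter> E = {}" for B unfolding Q_def by auto
      have QQ: "disjnt (Q B) (Q B')" if "B \<in> P" "B' \<in> P" "Q B \<noteq> Q B'" for B B'
      proof -
        have "B \<noteq> B'" using that by auto
        hence "\<iota> B \<noteq> \<iota> B'" using inj that unfolding inj_on_def by auto
        thus ?thesis unfolding disjnt_def Q_def using that by (auto intro: antisym)
      qed
      consider s where "X = {s}" "s \<in> E" | B where "B \<in> P" "X = Q B" using X unfolding P'_def by auto
      then show "disjnt X Y"
      proof cases
        case 1
        note X1 = 1
        consider t where "Y = {t}" "t \<in> E" | B' where "B' \<in> P" "Y = Q B'" using Y unfolding P'_def by auto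
        then show ?thesis
        proof cases
          case 1
          then show ?thesis using X1 XY by (auto simp: disjnt_def)
        next
          case 2
          then show ?thesis using X1 QE[of B'] by (auto simp: disjnt_def)
        qed
      next
        case 2
        note X2 = 2
        consider t where "Y = {t}" "t \<in> E" | B' where "B' \<in> P" "Y = Q B'" using Y unfolding P'_def by auto
        then show ?thesis
        proof cases
          case 1
          then show ?thesis using X2 QE[of B] by (auto simp: disjnt_def)
        next
          case 2
          then show ?thesis using X2 QQ[of B B'] XY by auto
        qed
      qed
    qed
    moreover have "\<forall>B\<in>P'. (\<exists>s. B = {s}) \<or> locally_in B (down H)"
    proof
      fix X assume "X \<in> P'"
      then consider s where "X = {s}" | B where "B \<in> P" "X = Q B" unfolding P'_def by auto
      then show "(\<exists>s. X = {s}) \<or> locally_in X (down H)"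
      proof cases
        case 1 then show ?thesis by auto
      next
        case 2
        have "Q B \<subseteq> B - ee B" unfolding Q_def E_def using 2 by auto
        thus ?thesis using ee[OF 2(1)] 2 locally_in_mono by blast
      qed
    qed
    ultimately show ?thesis by blast
  qed
qed

end
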